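(* Let $K=2$, let $-1<\ell\le u<1$, and for $\rho\in[\ell,u]$ let $M_\rho=\begin{pmatrix}1&\rho\\ \rho&1\end{pmatrix}$. Fix $\alpha\in(0,1)$ and let $c(\rho)$ denote the $1-\alpha$ quantile, $c(\rho)=\inf\{c:\mathbb{P}\{\bar\chi^2(M_\rho^{-1},\Lambda_+)\le c\}\ge1-\alpha\}$. Then $c(\ell)\ge c(\rho)$ for every $\rho\in[\ell,u]$; i.e., the most conservative (largest) $1-\alpha$ quantile over this set of correlation matrices is attained at $\rho=\ell$.
   Context: $\Lambda_+=\{\lambda\in\mathbb{R}^2:\lambda_1\ge0,\lambda_2\ge0,\ \lambda_1+\lambda_2>0\}$. For a positive definite $2\times2$ matrix $V$, the chi-bar-squared distribution $\bar\chi^2(V,\Lambda_+)$ is the law of $X^TV^{-1}X-\inf_{\theta\in\Lambda_+}(X-\theta)^TV^{-1}(X-\theta)$ where $X\sim N_2(0,V)$. *)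

theory Defs
  imports "HOL-Analysis.Analysis"
begin

text \<open>The cone Lambda_+ in R^2.\<close>
definition Lambda_plus :: "(real^2) set" where
  "Lambda_plus = {\<theta>. \<theta>$1 \<ge> 0 \<and> \<theta>$2 \<ge> 0 \<and> \<theta>$1 + \<theta>$2 > 0}"

text \<open>Quadratic form y^T A y.\<close>
definition qform :: "real^2^2 \<Rightarrow> real^2 \<Rightarrow> real" where
  "qform A y = y \<bullet> (A *v y)"

text \<open>The chi-bar-squared statistic for covariance V evaluated at X = x.\<close>
definition chibar_stat :: "real^2^2 \<Rightarrow> real^2 \<Rightarrow> real" where
  "chibar_stat V x = qform (matrix_inv V) x
      - (INF \<theta>\<in>Lambda_plus. qform (matrix_inv V) (x - \<theta>))"

text \<open>Density of the centred bivariate normal N_2(0,V) w.r.t. Lebesgue measure.\<close>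
definition gauss2_density :: "real^2^2 \<Rightarrow> real^2 \<Rightarrow> real" where
  "gauss2_density V x = exp (- qform (matrix_inv V) x / 2) / (2 * pi * sqrt (det V))"

definition gauss2 :: "real^2^2 \<Rightarrow> (real^2) measure" where
  "gauss2 V = density lborel (\<lambda>x. ennreal (gauss2_density V x))"

text \<open>CDF of the chi-bar-squared distribution: P{chibar^2(V,Lambda_+) <= c}.\<close>
definition chibar_cdf :: "real^2^2 \<Rightarrow> real \<Rightarrow> real" where
  "chibar_cdf V c = measure (gauss2 V) {x. chibar_stat V x \<le> c}"

text \<open>The (1 - alpha) quantile.\<close>
definition chibar_quantile :: "real^2^2 \<Rightarrow> real \<Rightarrow> real" where
  "chibar_quantile V \<alpha> = Inf {c. chibar_cdf V c \<ge> 1 - \<alpha>}"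

text \<open>Correlation matrix M_rho.\<close>
definition corr_mat :: "real \<Rightarrow> real^2^2" where
  "corr_mat \<rho> = vector [vector [1, \<rho>], vector [\<rho>, 1]]"

end

theory Submission
  imports Defs "HOL-Probability.Probability"
begin


lemma vec2_eq: "(x::real^2) = y \<longleftrightarrow> x$1 = y$1 \<and> x$2 = y$2"
  by (simp add: vec_eq_iff forall_2)

lemma mat2_eq: "(A::real^2^2) = B \<longleftrightarrow> A$1$1 = B$1$1 \<and> A$1$2 = B$1$2 \<and> A$2$1 = B$2$1 \<and> A$2$2 = B$2$2"
  by (auto simp add: vec_eq_iff forall_2)

lemma matrix_inv_unique:
  fixes A B :: "real^2^2"
  assumes "A ** B = mat 1" "B ** A = mat 1"
  shows "matrix_inv A = B"
proof -
  have ex: "\<exists>A'. A ** A' = mat 1 \<and> A' ** A = mat 1" using assms by blast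
  define C where "C = matrix_inv A"
  have C: "A ** C = mat 1 \<and> C ** A = mat 1"
    unfolding C_def matrix_inv_def by (rule someI_ex[OF ex])
  have "C = C ** (A ** B)" using assms by (simp add: matrix_mul_rid)
  also have "\<dots> = (C ** A) ** B" by (simp add: matrix_mul_assoc)
  also have "\<dots> = B" using C by (simp add: matrix_mul_lid)
  finally show ?thesis unfolding C_def .
qed

definition Wm :: "real \<Rightarrow> real^2^2" where
  "Wm r = vector [vector [1/(1-r^2), -r/(1-r^2)], vector [-r/(1-r^2), 1/(1-r^2)]]"

lemma Wm_inv:
  assumes "\<bar>r\<bar> < 1"
  shows "matrix_inv (corr_mat r) = Wm r" "matrix_inv (Wm r) = corr_mat r"
proof -
  have "r^2 < 1" using assms by (simp add: abs_square_less_1)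
  then have ne: "1 - r^2 \<noteq> 0" by simp
  have ne2: "1 + r*(r*(r*r)) - r*(r*2) \<noteq> 0"
  proof -
    have "1 + r*(r*(r*r)) - r*(r*2) = (1 - r^2)^2" by (simp add: power2_eq_square algebra_simps)
    then show ?thesis using ne by simp
  qed
  have 1: "corr_mat r ** Wm r = mat 1" "Wm r ** corr_mat r = mat 1"
    using ne by (auto simp: mat2_eq matrix_matrix_mult_def sum_2 corr_mat_def Wm_def mat_def divide_simps power2_eq_square)
  show "matrix_inv (corr_mat r) = Wm r" "matrix_inv (Wm r) = corr_mat r"
    using matrix_inv_unique 1 by auto
qed

lemma det_Wm: "\<bar>r\<bar> < 1 \<Longrightarrow> det (Wm r) = 1/(1-r^2)"
proof -
  assume "\<bar>r\<bar> < 1"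
  then have "r^2 < 1" by (simp add: abs_square_less_1)
  then have ne: "1 - r^2 \<noteq> 0" by simp
  define d where "d = 1 - r^2"
  have dne: "d \<noteq> 0" using ne by (simp add: d_def)
  have "det (Wm r) = 1/d*(1/d) - (-r/d)*(-r/d)" by (simp add: det_2 Wm_def d_def)
  also have "1/d*(1/d) - (-r/d)*(-r/d) = (1 - r^2)/(d*d)" using dne by (simp add: field_simps power2_eq_square)
  also have "\<dots> = d/(d*d)" by (simp add: d_def)
  also have "\<dots> = 1/d" using dne by simp
  finally show ?thesis by (simp add: d_def)
qed

lemma qform_corr: "qform (corr_mat r) x = (x$1)^2 + 2*r*x$1*x$2 + (x$2)^2"
  by (simp add: qform_def inner_vec_def sum_2 matrix_vector_mult_def corr_mat_def algebra_simps power2_eq_square)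

definition sr :: "real \<Rightarrow> real" where "sr r = sqrt (1 - r^2)"

lemma sr_pos: "\<bar>r\<bar> < 1 \<Longrightarrow> sr r > 0"
  unfolding sr_def by (simp add: abs_square_less_1)

lemma sr_sq: "\<bar>r\<bar> < 1 \<Longrightarrow> (sr r)^2 = 1 - r^2"
  unfolding sr_def by (simp add: abs_square_less_1 less_imp_le)

definition Lmat :: "real \<Rightarrow> real^2^2" where
  "Lmat r = vector [vector [1, r], vector [0, sr r]]"

definition Amat :: "real \<Rightarrow> real^2^2" where
  "Amat r = vector [vector [1, - r / sr r], vector [0, 1 / sr r]]"

definition Am :: "real \<Rightarrow> real^2 \<Rightarrow> real^2" where
  "Am r y = Amat r *v y"

lemma Am_apply: "(Am r y)$1 = y$1 - r * y$2 / sr r" "(Am r y)$2 = y$2 / sr r"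
  by (simp_all add: Am_def Amat_def matrix_vector_mult_def sum_2)

lemma Lmat_apply: "(Lmat r *v x)$1 = x$1 + r * x$2" "(Lmat r *v x)$2 = sr r * x$2"
  by (simp_all add: Lmat_def matrix_vector_mult_def sum_2)

lemma det_Lmat: "det (Lmat r) = sr r"
  by (simp add: det_2 Lmat_def)

lemma Am_L: "\<bar>r\<bar> < 1 \<Longrightarrow> Am r (Lmat r *v x) = x"
  using sr_pos[of r] by (simp add: vec2_eq Am_apply Lmat_apply field_simps)

lemma L_Am: "\<bar>r\<bar> < 1 \<Longrightarrow> Lmat r *v (Am r y) = y"
  using sr_pos[of r] by (simp add: vec2_eq Am_apply Lmat_apply field_simps)

lemma qf_L: "\<bar>r\<bar> < 1 \<Longrightarrow> qform (corr_mat r) x = ((Lmat r *v x)$1)^2 + ((Lmat r *v x)$2)^2"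
proof -
  assume a: "\<bar>r\<bar> < 1"
  have h: "r^2 + (sr r)^2 = 1" using sr_sq[OF a] by simp
  have "((Lmat r *v x)$1)^2 + ((Lmat r *v x)$2)^2 = (x$1)^2 + 2*r*x$1*x$2 + (r^2 + (sr r)^2)*(x$2)^2"
    by (simp add: Lmat_apply power2_eq_square algebra_simps)
  also have "\<dots> = (x$1)^2 + 2*r*x$1*x$2 + (x$2)^2" by (simp only: h mult_1)
  finally show ?thesis by (simp add: qform_corr)
qed

lemma qf_Am: "\<bar>r\<bar> < 1 \<Longrightarrow> qform (corr_mat r) (Am r y - t) =
   (y$1 - (t$1 + r*t$2))^2 + (y$2 - sr r * t$2)^2"
proof -
  assume a: "\<bar>r\<bar> < 1"
  have "Lmat r *v (Am r y - t) = y - Lmat r *v t"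
    by (simp add: matrix_vector_mult_diff_distrib L_Am[OF a])
  then show ?thesis using qf_L[OF a, of "Am r y - t"] by (simp add: Lmat_apply)
qed

definition phi :: "real^2 \<Rightarrow> real" where
  "phi y = exp (- ((y$1)^2 + (y$2)^2) / 2) / (2 * pi)"

lemma gd_eq: "\<bar>r\<bar> < 1 \<Longrightarrow> gauss2_density (matrix_inv (corr_mat r)) x = sr r * phi (Lmat r *v x)"
proof -
  assume a: "\<bar>r\<bar> < 1"
  have h: "sqrt (det (Wm r)) = 1 / sr r"
    using a by (simp add: det_Wm sr_def real_sqrt_divide)
  show ?thesis using a sr_pos[of r]
    by (simp add: h gauss2_density_def Wm_inv[OF a] qf_L[OF a] phi_def field_simps)
qed

definition D :: "real \<Rightarrow> real^2 \<Rightarrow> real^2 \<Rightarrow> real" where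
  "D r y t = (y$1 - (t$1 + r*t$2))^2 + (y$2 - sr r * t$2)^2"

lemma Lp_mem: "t \<in> Lambda_plus \<longleftrightarrow> t$1 \<ge> 0 \<and> t$2 \<ge> 0 \<and> t$1 + t$2 > 0"
  by (simp add: Lambda_plus_def)

lemma Lp_ne: "Lambda_plus \<noteq> {}"
proof -
  have "vector [1, 0] \<in> Lambda_plus" by (simp add: Lp_mem)
  then show ?thesis by blast
qed

lemma stat_Am: "\<bar>r\<bar> < 1 \<Longrightarrow> chibar_stat (matrix_inv (corr_mat r)) (Am r y) =
   (y$1)^2 + (y$2)^2 - (INF t\<in>Lambda_plus. D r y t)"
proof -
  assume a: "\<bar>r\<bar> < 1"
  have "qform (corr_mat r) (Am r y) = (y$1)^2 + (y$2)^2" using qf_Am[OF a, of y 0] by simp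
  then show ?thesis using a by (simp add: chibar_stat_def Wm_inv qf_Am D_def)
qed

lemma key_ineq:
  assumes "-1 < l" "l \<le> r" "r < 1"
  shows "l * sr r \<le> r * sr l"
proof -
  have al: "\<bar>l\<bar> < 1" and ar: "\<bar>r\<bar> < 1" using assms by auto
  have pl: "sr l > 0" and pr: "sr r > 0" using sr_pos al ar by auto
  have sql: "(sr l)^2 = 1 - l^2" and sqr: "(sr r)^2 = 1 - r^2" using sr_sq al ar by auto
  consider "l \<le> 0" "0 \<le> r" | "0 < l" | "r < 0" by linarith
  then show ?thesis
  proof cases
    case 1 then show ?thesis using pl pr by (meson mult_nonneg_nonneg mult_nonpos_nonneg order_trans less_imp_le)
  next
    case 2
    have "l^2 \<le> r^2" using 2 assms by (simp add: power_mono)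
    then have "(l * sr r)^2 \<le> (r * sr l)^2"
      by (simp add: power_mult_distrib sql sqr algebra_simps)
    moreover have "0 \<le> r * sr l" using 2 assms pl by simp
    ultimately show ?thesis using power2_le_imp_le by blast
  next
    case 3
    have "(-r)^2 \<le> (-l)^2" using 3 assms by (intro power_mono) auto
    then have "r^2 \<le> l^2" by simp
    then have "r^2 * (1 - l^2) \<le> l^2 * (1 - r^2)" by (simp add: algebra_simps)
    then have "((-r) * sr l)^2 \<le> ((-l) * sr r)^2"
      by (simp only: power_mult_distrib sql sqr power2_minus)
    moreover have "0 \<le> (-l) * sr r" using 3 assms pr by (intro mult_nonneg_nonneg) auto
    ultimately have "(-r) * sr l \<le> (-l) * sr r" using power2_le_imp_le by blast
    then show ?thesis by simp
  qed
qed

lemma D_nonneg: "D r y t \<ge> 0" by (simp add: D_def)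

lemma INF_mono_D:
  assumes "-1 < l" "l \<le> r" "r < 1"
  shows "(INF t\<in>Lambda_plus. D l y t) \<le> (INF t\<in>Lambda_plus. D r y t)"
proof (rule cINF_mono)
  show "Lambda_plus \<noteq> {}" by (rule Lp_ne)
  show "bdd_below (D l y ` Lambda_plus)" by (rule bdd_belowI[of _ 0]) (auto simp: D_nonneg)
  fix t assume t: "t \<in> Lambda_plus"
  have al: "\<bar>l\<bar> < 1" and ar: "\<bar>r\<bar> < 1" using assms by auto
  have pl: "sr l > 0" and pr: "sr r > 0" using sr_pos al ar by auto
  define b where "b = sr r * t$2 / sr l"
  define a where "a = t$1 + r * t$2 - l * b"
  have t1: "t$1 \<ge> 0" and t2: "t$2 \<ge> 0" and t12: "t$1 + t$2 > 0" using t by (auto simp: Lp_mem)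
  have b0: "b \<ge> 0" using t2 pl pr by (simp add: b_def)
  have "l * b = t$2 * (l * sr r) / sr l" by (simp add: b_def)
  also have "\<dots> \<le> t$2 * (r * sr l) / sr l"
    using key_ineq[OF assms] t2 pl by (intro divide_right_mono mult_left_mono) auto
  also have "\<dots> = r * t$2" using pl by simp
  finally have lb: "l * b \<le> r * t$2" .
  have a0: "a \<ge> 0" using lb t1 by (simp add: a_def)
  have ab: "a + b > 0"
  proof (cases "t$2 = 0")
    case True then show ?thesis using t12 by (simp add: a_def b_def)
  next
    case False then have "b > 0" using t2 pl pr by (simp add: b_def)
    then show ?thesis using a0 by simp
  qed
  have mem: "vector [a, b] \<in> Lambda_plus" using a0 b0 ab by (simp add: Lp_mem)
  have "D l y (vector [a, b]) = D r y t"
    using pl by (simp add: D_def a_def b_def)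
  then show "\<exists>n\<in>Lambda_plus. D l y n \<le> D r y t" using mem by force
qed

lemma stat_nonneg:
  assumes a: "\<bar>r\<bar> < 1"
  shows "chibar_stat (matrix_inv (corr_mat r)) x \<ge> 0"
proof -
  define y where "y = Lmat r *v x"
  have x: "x = Am r y" using Am_L[OF a] by (simp add: y_def)
  have bdd: "bdd_below (D r y ` Lambda_plus)" by (rule bdd_belowI[of _ 0]) (auto simp: D_nonneg)
  have le: "(INF t\<in>Lambda_plus. D r y t) \<le> (y$1 - s)^2 + (y$2)^2" if "s > 0" for s
  proof -
    have m: "vector [s, 0] \<in> Lambda_plus" using that by (simp add: Lp_mem)
    have "(INF t\<in>Lambda_plus. D r y t) \<le> D r y (vector [s, 0])" by (rule cINF_lower[OF bdd m])
    then show ?thesis by (simp add: D_def)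
  qed
  have lim: "((\<lambda>s. (y$1 - s)^2 + (y$2)^2) \<longlongrightarrow> (y$1 - 0)^2 + (y$2)^2) (at_right 0)"
    by (intro tendsto_intros)
  have "(INF t\<in>Lambda_plus. D r y t) \<le> (y$1 - 0)^2 + (y$2)^2"
    by (rule tendsto_lowerbound[OF lim]) (auto intro: eventually_mono[OF eventually_at_right_less] le)
  then show ?thesis using stat_Am[OF a, of y] x by simp
qed

lemma stat_eq: "\<bar>r\<bar> < 1 \<Longrightarrow> chibar_stat (matrix_inv (corr_mat r)) x =
   qform (corr_mat r) x - (INF t\<in>Lambda_plus. qform (corr_mat r) (x - t))"
  by (simp add: chibar_stat_def Wm_inv)

lemma closed_stat:
  assumes a: "\<bar>r\<bar> < 1"
  shows "closed {x. chibar_stat (matrix_inv (corr_mat r)) x \<le> c}"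
proof -
  let ?q = "qform (corr_mat r)"
  have bdd: "bdd_below ((\<lambda>t. ?q (x - t)) ` Lambda_plus)" for x
    by (rule bdd_belowI[of _ 0]) (auto simp: qf_L[OF a])
  have eq: "chibar_stat (matrix_inv (corr_mat r)) x \<le> c \<longleftrightarrow> (\<forall>t\<in>Lambda_plus. ?q x - c \<le> ?q (x - t))" for x
  proof -
    have "chibar_stat (matrix_inv (corr_mat r)) x \<le> c \<longleftrightarrow> ?q x - c \<le> (INF t\<in>Lambda_plus. ?q (x - t))"
      by (simp add: stat_eq[OF a]) linarith
    also have "\<dots> \<longleftrightarrow> (\<forall>t\<in>Lambda_plus. ?q x - c \<le> ?q (x - t))"
      by (rule le_cINF_iff[OF Lp_ne bdd])
    finally show ?thesis .
  qed
  have "{x. chibar_stat (matrix_inv (corr_mat r)) x \<le> c} = (\<Inter>t\<in>Lambda_plus. {x. ?q x - c \<le> ?q (x - t)})"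
    using eq by auto
  also have "closed \<dots>"
    by (intro closed_INT ballI closed_Collect_le) (auto simp: qform_corr intro!: continuous_intros)
  finally show ?thesis .
qed

lemma cv:
  fixes h :: "real^2 \<Rightarrow> real" and B :: "real^2^2"
  assumes surj: "\<And>y. B *v (C y) = y"
    and hm: "h \<in> borel_measurable borel" and hn: "\<And>y. 0 \<le> h y"
    and fin: "(\<integral>\<^sup>+y. h y \<partial>lborel) < \<infinity>"
  shows "(\<integral>\<^sup>+x. ennreal (\<bar>det B\<bar> * h (B *v x)) \<partial>lborel) = (\<integral>\<^sup>+y. h y \<partial>lborel)"
proof -
  obtain r where r: "(\<integral>\<^sup>+y. h y \<partial>lborel) = ennreal r" "0 \<le> r"
    using fin by (cases "\<integral>\<^sup>+y. h y \<partial>lborel" rule: ennreal_cases) auto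
  have hi: "(h has_integral r) UNIV" by (rule nn_integral_has_integral[OF hm hn r])
  define H :: "real^2 \<Rightarrow> real^1" where "H y = (\<chi> i. h y)" for y
  have bas: "\<And>b::real^1. b \<in> Basis \<Longrightarrow> (\<exists>i. b = axis i 1)"
    unfolding Basis_vec_def by (simp add: Basis_real_def)
  have Hi: "(H has_integral (\<chi> i. r)) UNIV"
  proof (rule has_integral_componentwise_iff[THEN iffD2], rule ballI)
    fix b :: "real^1" assume "b \<in> Basis"
    then obtain i where b: "b = axis i 1" using bas by blast
    show "((\<lambda>x. H x \<bullet> b) has_integral (\<chi> i. r) \<bullet> b) UNIV"
      using hi by (simp add: b inner_axis H_def)
  qed
  have Ha: "H absolutely_integrable_on UNIV"
  proof (rule absolutely_integrable_componentwise_iff[THEN iffD2], rule ballI)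
    fix b :: "real^1" assume "b \<in> Basis"
    then obtain i where b: "b = axis i 1" using bas by blast
    have "h absolutely_integrable_on UNIV"
      using hi hn by (intro nonnegative_absolutely_integrable_1) auto
    then show "(\<lambda>x. H x \<bullet> b) absolutely_integrable_on UNIV"
      by (simp add: b inner_axis H_def)
  qed
  have img: "(\<lambda>x. B *v x) ` UNIV = UNIV"
    using surj by (metis surj_def)
  have "(\<lambda>x. \<bar>det (matrix ((*v) B))\<bar> *\<^sub>R H ((*v) B x)) absolutely_integrable_on UNIV \<and>
        integral UNIV (\<lambda>x. \<bar>det (matrix ((*v) B))\<bar> *\<^sub>R H ((*v) B x)) = (\<chi> i. r)"
    using has_absolute_integral_change_of_variables_linear[OF matrix_vector_mul_linear[of B], where f=H and S=UNIV and b="\<chi> i. r"]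
      Ha Hi img by (auto simp: integral_unique)
  then have ai: "(\<lambda>x. \<bar>det (matrix ((*v) B))\<bar> *\<^sub>R H ((*v) B x)) absolutely_integrable_on UNIV"
    and ii: "integral UNIV (\<lambda>x. \<bar>det (matrix ((*v) B))\<bar> *\<^sub>R H ((*v) B x)) = (\<chi> i. r)" by auto
  have "((\<lambda>x. \<bar>det (matrix ((*v) B))\<bar> *\<^sub>R H ((*v) B x)) has_integral (\<chi> i. r)) UNIV"
    using integrable_integral[OF ai[unfolded absolutely_integrable_on_def, THEN conjunct1]] unfolding ii .
  then have "((\<lambda>x. \<bar>det B\<bar> *\<^sub>R H (B *v x)) has_integral (\<chi> i. r)) UNIV"
    by (simp only: matrix_of_matrix_vector_mul)
  then have allb: "\<forall>b\<in>Basis. ((\<lambda>x. (\<bar>det B\<bar> *\<^sub>R H (B *v x)) \<bullet> b) has_integral (\<chi> i. r) \<bullet> b) UNIV"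
    by (rule has_integral_componentwise_iff[THEN iffD1])
  have ax1: "(axis 1 1 :: real^1) \<in> Basis" unfolding Basis_vec_def Basis_real_def by auto
  have "((\<lambda>x. (\<bar>det B\<bar> *\<^sub>R H (B *v x)) \<bullet> (axis 1 1 :: real^1)) has_integral ((\<chi> i. r) :: real^1) \<bullet> axis 1 1) UNIV"
    by (rule bspec[OF allb ax1])
  then have gi: "((\<lambda>x. \<bar>det B\<bar> * h (B *v x)) has_integral r) UNIV"
    by (simp add: inner_axis H_def)
  have gm: "(\<lambda>x. \<bar>det B\<bar> * h (B *v x)) \<in> borel_measurable borel"
    using hm by (intro borel_measurable_times borel_measurable_const measurable_compose[OF _ hm]
        borel_measurable_continuous_onI matrix_vector_mult_linear_continuous_on)
  have "(\<integral>\<^sup>+x. ennreal (\<bar>det B\<bar> * h (B *v x)) \<partial>lborel) = r"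
    by (rule nn_integral_has_integral_lborel[OF gm _ gi]) (simp add: hn)
  then show ?thesis using r by simp
qed



lemma Basis_vec2: "(Basis :: (real^2) set) = {axis 1 1, axis 2 1}"
  unfolding Basis_vec_def Basis_real_def UNIV_2 by auto

lemma std_int: "(\<integral>\<^sup>+x. ennreal (std_normal_density x) \<partial>lborel) = 1"
proof -
  interpret prob_space "density lborel (\<lambda>x. ennreal (normal_density 0 1 x))"
    by (rule prob_space_normal_density) simp
  have "emeasure (density lborel (\<lambda>x. ennreal (normal_density 0 1 x))) UNIV = 1"
    using emeasure_space_1 by simp
  then show ?thesis by (simp add: emeasure_density)
qed

lemma phi_int: "(\<integral>\<^sup>+y. ennreal (phi y) \<partial>lborel) = 1"
proof -
  have ax: "axis 1 (1::real) \<noteq> (axis 2 1 :: real^2)" by (simp add: axis_eq_axis)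
  have "(\<lambda>y. ennreal (phi y)) = (\<lambda>y. \<Prod>b\<in>Basis. ennreal (std_normal_density (y \<bullet> b)))"
  proof
    fix y :: "real^2"
    have sq: "sqrt (2*pi) * sqrt (2*pi) = 2 * pi" by simp
    have "std_normal_density (y$1) * std_normal_density (y$2) =
        exp (- ((y$1)^2) / 2) * exp (- ((y$2)^2) / 2) / (sqrt (2*pi) * sqrt (2*pi))"
      by (simp add: std_normal_density_def)
    also have "\<dots> = exp (- ((y$1)^2) / 2 + - ((y$2)^2) / 2) / (2*pi)"
      by (simp only: sq exp_add)
    also have "\<dots> = phi y" by (simp add: phi_def add_divide_distrib)
    finally have "phi y = std_normal_density (y$1) * std_normal_density (y$2)" by simp
    then show "ennreal (phi y) = (\<Prod>b\<in>Basis. ennreal (std_normal_density (y \<bullet> b)))"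
      by (simp add: Basis_vec2 ax inner_axis ennreal_mult')
  qed
  then have "(\<integral>\<^sup>+y. ennreal (phi y) \<partial>lborel) = (\<integral>\<^sup>+(y::real^2). (\<Prod>b\<in>Basis. ennreal (std_normal_density (y \<bullet> b))) \<partial>lborel)"
    by simp
  also have "\<dots> = (\<Prod>b\<in>(Basis::(real^2) set). (\<integral>\<^sup>+x. ennreal (std_normal_density x) \<partial>lborel))"
    by (rule nn_integral_lborel_prod) auto
  finally show ?thesis by (simp add: std_int)
qed

lemma phi_nonneg: "phi y \<ge> 0" by (simp add: phi_def)

lemma phi_meas: "phi \<in> borel_measurable borel"
  unfolding phi_def by (intro borel_measurable_continuous_onI continuous_intros) auto

lemma Am_meas: "Am r \<in> borel_measurable borel"
  unfolding Am_def[abs_def] by (intro borel_measurable_continuous_onI matrix_vector_mult_linear_continuous_on)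

lemma emeasure_gauss:
  assumes a: "\<bar>r\<bar> < 1" and E: "E \<in> sets borel"
  shows "emeasure (gauss2 (matrix_inv (corr_mat r))) E = (\<integral>\<^sup>+y. ennreal (phi y * indicator E (Am r y)) \<partial>lborel)"
proof -
  define h where "h y = phi y * indicator E (Am r y)" for y
  have hm: "h \<in> borel_measurable borel"
    unfolding h_def using E measurable_sets[OF Am_meas E]
    by (intro borel_measurable_times phi_meas borel_measurable_indicator') (auto simp: vimage_def)
  have hn: "\<And>y. 0 \<le> h y" by (simp add: h_def phi_nonneg)
  have "(\<integral>\<^sup>+y. h y \<partial>lborel) \<le> (\<integral>\<^sup>+y. ennreal (phi y) \<partial>lborel)"
    by (intro nn_integral_mono) (auto simp: h_def indicator_def phi_nonneg)
  then have le1: "(\<integral>\<^sup>+y. h y \<partial>lborel) \<le> 1" by (simp only: phi_int)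
  have "(1::ennreal) < \<infinity>" by simp
  then have fin: "(\<integral>\<^sup>+y. h y \<partial>lborel) < \<infinity>" using le1 by (rule order.strict_trans1[rotated])
  have gm: "(\<lambda>x. ennreal (gauss2_density (matrix_inv (corr_mat r)) x)) \<in> borel_measurable lborel"
  proof -
    have "(\<lambda>x. Lmat r *v x) \<in> borel_measurable borel"
      by (rule borel_measurable_continuous_onI[OF matrix_vector_mult_linear_continuous_on])
    then have "(\<lambda>x. phi (Lmat r *v x)) \<in> borel_measurable borel" using phi_meas by (rule measurable_compose)
    then have "(\<lambda>x. sr r * phi (Lmat r *v x)) \<in> borel_measurable borel"
      by (intro borel_measurable_times borel_measurable_const)
    then show ?thesis by (simp add: gd_eq[OF a])
  qed
  have "emeasure (gauss2 (matrix_inv (corr_mat r))) E =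
     (\<integral>\<^sup>+x. ennreal (gauss2_density (matrix_inv (corr_mat r)) x) * indicator E x \<partial>lborel)"
    unfolding gauss2_def by (rule emeasure_density[OF gm]) (use E in simp)
  also have "\<dots> = (\<integral>\<^sup>+x. ennreal (\<bar>det (Lmat r)\<bar> * h (Lmat r *v x)) \<partial>lborel)"
  proof (rule nn_integral_cong)
    fix x :: "real^2"
    have "\<bar>det (Lmat r)\<bar> * h (Lmat r *v x) = gauss2_density (matrix_inv (corr_mat r)) x * indicator E x"
      using sr_pos[OF a] by (simp add: gd_eq[OF a] h_def Am_L[OF a] det_Lmat)
    then show "ennreal (gauss2_density (matrix_inv (corr_mat r)) x) * indicator E x =
       ennreal (\<bar>det (Lmat r)\<bar> * h (Lmat r *v x))"
      by (simp split: split_indicator)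
  qed
  also have "\<dots> = (\<integral>\<^sup>+y. h y \<partial>lborel)"
    by (rule cv[OF L_Am[OF a] hm hn fin])
  finally show ?thesis by (simp only: h_def)
qed

lemma borel_E: "\<bar>r\<bar> < 1 \<Longrightarrow> {x. chibar_stat (matrix_inv (corr_mat r)) x \<le> c} \<in> sets borel"
  by (rule borel_closed[OF closed_stat])

lemma emeasure_le1:
  assumes a: "\<bar>r\<bar> < 1" and E: "E \<in> sets borel"
  shows "emeasure (gauss2 (matrix_inv (corr_mat r))) E \<le> 1"
proof -
  have "(\<integral>\<^sup>+y. ennreal (phi y * indicator E (Am r y)) \<partial>lborel) \<le> (\<integral>\<^sup>+y. ennreal (phi y) \<partial>lborel)"
    by (intro nn_integral_mono) (auto simp: indicator_def phi_nonneg)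
  then show ?thesis using emeasure_gauss[OF a E] by (simp only: phi_int)
qed

lemma emeasure_UNIV_gauss:
  assumes a: "\<bar>r\<bar> < 1"
  shows "emeasure (gauss2 (matrix_inv (corr_mat r))) UNIV = 1"
  using emeasure_gauss[OF a, of UNIV] phi_int by simp

lemma cdf_le:
  assumes "-1 < l" "l \<le> r" "r < 1"
  shows "chibar_cdf (matrix_inv (corr_mat l)) c \<le> chibar_cdf (matrix_inv (corr_mat r)) c"
proof -
  have al: "\<bar>l\<bar> < 1" and ar: "\<bar>r\<bar> < 1" using assms by auto
  define El where "El = {x. chibar_stat (matrix_inv (corr_mat l)) x \<le> c}"
  define Er where "Er = {x. chibar_stat (matrix_inv (corr_mat r)) x \<le> c}"
  have bl: "El \<in> sets borel" and br: "Er \<in> sets borel"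
    unfolding El_def Er_def using borel_E al ar by auto
  have pt: "indicator El (Am l y) \<le> (indicator Er (Am r y) :: real)" for y
  proof -
    have "chibar_stat (matrix_inv (corr_mat r)) (Am r y) \<le> chibar_stat (matrix_inv (corr_mat l)) (Am l y)"
      using stat_Am[OF al, of y] stat_Am[OF ar, of y] INF_mono_D[OF assms, of y] by simp
    then show ?thesis by (auto simp: indicator_def El_def Er_def)
  qed
  have "emeasure (gauss2 (matrix_inv (corr_mat l))) El \<le> emeasure (gauss2 (matrix_inv (corr_mat r))) Er"
    unfolding emeasure_gauss[OF al bl] emeasure_gauss[OF ar br]
    by (intro nn_integral_mono ennreal_leI mult_left_mono pt phi_nonneg)
  moreover have "emeasure (gauss2 (matrix_inv (corr_mat r))) Er < top"
    using emeasure_le1[OF ar br] by (simp add: order_le_less_trans)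
  ultimately have "enn2real (emeasure (gauss2 (matrix_inv (corr_mat l))) El) \<le>
      enn2real (emeasure (gauss2 (matrix_inv (corr_mat r))) Er)"
    by (rule enn2real_mono)
  then show ?thesis unfolding chibar_cdf_def measure_def El_def Er_def .
qed

theorem mainTheorem8:
  fixes l u \<alpha> \<rho> :: real
  assumes "-1 < l" and "l \<le> u" and "u < 1"
    and "0 < \<alpha>" and "\<alpha> < 1"
    and "\<rho> \<in> {l..u}"
  shows "chibar_quantile (matrix_inv (corr_mat l)) \<alpha>
           \<ge> chibar_quantile (matrix_inv (corr_mat \<rho>)) \<alpha>"
proof -
  have lr: "-1 < l" "l \<le> \<rho>" "\<rho> < 1" using assms by auto
  have al: "\<bar>l\<bar> < 1" and ar: "\<bar>\<rho>\<bar> < 1" using lr by auto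
  define A where "A = {c. chibar_cdf (matrix_inv (corr_mat l)) c \<ge> 1 - \<alpha>}"
  define B where "B = {c. chibar_cdf (matrix_inv (corr_mat \<rho>)) c \<ge> 1 - \<alpha>}"
  have AB: "A \<subseteq> B" unfolding A_def B_def using cdf_le[OF lr] by (auto intro: order_trans)
  have Bb: "bdd_below B"
  proof (rule bdd_belowI[of _ 0])
    fix c assume c: "c \<in> B"
    show "0 \<le> c"
    proof (rule ccontr)
      assume "\<not> 0 \<le> c"
      then have "{x. chibar_stat (matrix_inv (corr_mat \<rho>)) x \<le> c} = {}"
        using stat_nonneg[OF ar] by (auto simp: not_le intro: order.strict_trans2)
      then have "chibar_cdf (matrix_inv (corr_mat \<rho>)) c = 0" by (simp add: chibar_cdf_def)
      then show False using c assms by (simp add: B_def)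
    qed
  qed
  have Ane: "A \<noteq> {}"
  proof -
    let ?M = "gauss2 (matrix_inv (corr_mat l))"
    define E where "E n = {x. chibar_stat (matrix_inv (corr_mat l)) x \<le> real n}" for n :: nat
    have sp: "space ?M = UNIV" by (simp add: gauss2_def)
    have st: "sets ?M = sets borel" by (simp add: gauss2_def)
    have fm: "finite_measure ?M"
      by (rule finite_measureI) (simp add: sp emeasure_UNIV_gauss[OF al])
    have rng: "range E \<subseteq> sets ?M" unfolding st E_def using borel_E[OF al] by auto
    have inc: "incseq E" unfolding E_def by (intro monoI) (auto intro: order_trans)
    have un: "(\<Union>n. E n) = UNIV"
    proof -
      have "x \<in> (\<Union>n. E n)" for x
      proof -
        obtain n where "chibar_stat (matrix_inv (corr_mat l)) x \<le> real n" using real_arch_simple by blast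
        then show ?thesis by (auto simp: E_def)
      qed
      then show ?thesis by auto
    qed
    have "(\<lambda>n. measure ?M (E n)) \<longlonglongrightarrow> measure ?M (\<Union>n. E n)"
      by (rule finite_measure.finite_Lim_measure_incseq[OF fm rng inc])
    moreover have "measure ?M (\<Union>n. E n) = 1"
      unfolding un measure_def using emeasure_UNIV_gauss[OF al] by simp
    ultimately have "eventually (\<lambda>n. 1 - \<alpha> < measure ?M (E n)) sequentially"
      using assms by (intro order_tendstoD(1)) auto
    then obtain n where "1 - \<alpha> < measure ?M (E n)" by (metis eventually_sequentially order_refl)
    then have "real n \<in> A" by (simp add: A_def chibar_cdf_def E_def)
    then show ?thesis by blast
  qed
  have "Inf B \<le> Inf A" by (rule cInf_superset_mono[OF Ane Bb AB])
  then show ?thesis by (simp add: chibar_quantile_def A_def B_def)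
qed

end
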